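(* Let $F$ be a signature on a finite set $V$ that is non-degenerate, but such that every pinning $F_p$ with $\mathrm{dom}(p)\ne\emptyset$ is degenerate. Then either $|V|=2$, or $\mathrm{supp}(F)=\{x,\overline x\}$ for some configuration $x$.
   Context: A signature on $V$ is a function $F:\{0,1\}^V\to\mathbb{R}_{\ge0}$; $\mathrm{supp}(F)=\{x:F(x)\ne0\}$. $F$ is degenerate if it is a product $F(x)=\prod_{v\in V}U_v(x_v)$ of functions of single variables (equivalently, up to renaming, a tensor product of signatures of arity at most one). A partial configuration $p$ is an element of $\{0,1\}^{\mathrm{dom}(p)}$, $\mathrm{dom}(p)\subseteq V$; the pinning $F_p$ on $V\setminus\mathrm{dom}(p)$ is $F_p(x)=F(x,p)$. $\overline x_i=1-x_i$. *)

theory Defs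
  imports Complex_Main
begin

text \<open>Configurations x \<in> {0,1}^V are encoded as subsets x \<subseteq> V (the set of
variables set to 1).\<close>

definition signature :: "'v set \<Rightarrow> ('v set \<Rightarrow> real) \<Rightarrow> bool" where
  "signature V F \<longleftrightarrow> (\<forall>x. x \<subseteq> V \<longrightarrow> F x \<ge> 0)"

definition supp :: "'v set \<Rightarrow> ('v set \<Rightarrow> real) \<Rightarrow> 'v set set" where
  "supp V F = {x. x \<subseteq> V \<and> F x \<noteq> 0}"

text \<open>Degenerate: a tensor product of signatures of arity at most one, i.e. a
nonnegative constant (arity-0 factor) times a product of nonnegative unary
functions U v evaluated at the value x_v = (v \<in> x).\<close>

definition degenerate :: "'v set \<Rightarrow> ('v set \<Rightarrow> real) \<Rightarrow> bool" where
  "degenerate V F \<longleftrightarrow> (\<exists>(c::real) (U :: 'v \<Rightarrow> bool \<Rightarrow> real).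
      c \<ge> 0 \<and> (\<forall>v b. U v b \<ge> 0) \<and>
      (\<forall>x. x \<subseteq> V \<longrightarrow> F x = c * (\<Prod>v\<in>V. U v (v \<in> x))))"

text \<open>A partial configuration p with domain D \<subseteq> V is encoded by (D, P) with
P \<subseteq> D the set of variables of D pinned to 1.  The pinning F_p is the
signature on V - D given by y \<mapsto> F (y \<union> P).\<close>

definition pinning :: "('v set \<Rightarrow> real) \<Rightarrow> 'v set \<Rightarrow> ('v set \<Rightarrow> real)" where
  "pinning F P = (\<lambda>y. F (y \<union> P))"

end

theory Submission
  imports Defs
begin

definition upd :: "'v set \<Rightarrow> 'v \<Rightarrow> bool \<Rightarrow> 'v set" where
  "upd a w b = (if b then insert w a else a - {w})"

lemma upd_sub: "a \<subseteq> W \<Longrightarrow> w \<in> W \<Longrightarrow> upd a w b \<subseteq> W"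
  by (auto simp: upd_def)

lemma star_deg:
  assumes "degenerate W G" "finite W" "y \<subseteq> W" "y0 \<subseteq> W"
  shows "G y * G y0 ^ card W = G y0 * (\<Prod>w\<in>W. G (upd y0 w (w\<in>y)))"
proof -
  obtain c U where c: "\<forall>x. x \<subseteq> W \<longrightarrow> G x = c * (\<Prod>v\<in>W. U v (v\<in>x))"
    using assms(1) unfolding degenerate_def by blast
  define g where "g v = U v (v \<in> y0)" for v
  have e1: "G (upd y0 w (w\<in>y)) = c * (U w (w\<in>y) * (\<Prod>v\<in>W-{w}. g v))" if w: "w \<in> W" for w
  proof -
    have "G (upd y0 w (w\<in>y)) = c * (\<Prod>v\<in>W. U v (v\<in>upd y0 w (w\<in>y)))"
      using c upd_sub[OF assms(4) w] by blast
    also have "(\<Prod>v\<in>W. U v (v\<in>upd y0 w (w\<in>y))) = U w (w\<in>upd y0 w (w\<in>y)) * (\<Prod>v\<in>W-{w}. U v (v\<in>upd y0 w (w\<in>y)))"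
      using prod.remove[OF assms(2) w] by blast
    also have "(\<Prod>v\<in>W-{w}. U v (v\<in>upd y0 w (w\<in>y))) = (\<Prod>v\<in>W-{w}. g v)"
      by (rule prod.cong) (auto simp: upd_def g_def)
    also have "U w (w\<in>upd y0 w (w\<in>y)) = U w (w\<in>y)" by (auto simp: upd_def)
    finally show ?thesis .
  qed
  have e2: "(\<Prod>w\<in>W. G (upd y0 w (w\<in>y))) = c ^ card W * (\<Prod>w\<in>W. U w (w\<in>y)) * (\<Prod>w\<in>W. \<Prod>v\<in>W-{w}. g v)"
    by (simp add: e1 prod.distrib)
  have key: "(\<Prod>w\<in>W. \<Prod>v\<in>W-{w}. g v) * (\<Prod>v\<in>W. g v) = (\<Prod>v\<in>W. g v) ^ card W"
  proof -
    have "(\<Prod>w\<in>W. \<Prod>v\<in>W-{w}. g v) * (\<Prod>v\<in>W. g v) = (\<Prod>w\<in>W. (\<Prod>v\<in>W-{w}. g v) * g w)"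
      by (simp add: prod.distrib)
    also have "\<dots> = (\<Prod>w\<in>W. (\<Prod>v\<in>W. g v))"
      by (rule prod.cong) (auto simp: prod.remove[OF assms(2)] mult.commute)
    finally show ?thesis by simp
  qed
  have gy: "G y = c * (\<Prod>w\<in>W. U w (w\<in>y))" using c assms(3) by blast
  have gy0: "G y0 = c * (\<Prod>v\<in>W. g v)" using c assms(4) by (simp add: g_def)
  show ?thesis
  proof -
    have "G y0 * (\<Prod>w\<in>W. G (upd y0 w (w\<in>y))) = c * c ^ card W * (\<Prod>w\<in>W. U w (w\<in>y)) * ((\<Prod>w\<in>W. \<Prod>v\<in>W-{w}. g v) * (\<Prod>v\<in>W. g v))"
      unfolding e2 gy0 by (simp only: mult_ac)
    also have "\<dots> = G y * G y0 ^ card W"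
      unfolding key gy gy0 power_mult_distrib by (simp only: mult_ac)
    finally show ?thesis by simp
  qed
qed

lemma deg_small:
  assumes "finite V" "card V \<le> 1" "signature V F"
  shows "degenerate V F"
proof (cases "card V = 0")
  case True
  hence "V = {}" using assms(1) by simp
  thus ?thesis unfolding degenerate_def using assms(3) unfolding signature_def
    by (intro exI[of _ "F {}"] exI[of _ "\<lambda>_ _. 1"]) auto
next
  case False
  hence "card V = 1" using assms(2) by simp
  then obtain v where V: "V = {v}" using card_1_singletonE by blast
  show ?thesis unfolding degenerate_def
  proof (intro exI[of _ "1"] exI[of _ "\<lambda>w b. F (if b then {v} else {})"] conjI allI impI)
    fix w b show "0 \<le> F (if b then {v} else {})" using assms(3) V unfolding signature_def by auto
  next
    fix x assume "x \<subseteq> V"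
    hence "x = {} \<or> x = {v}" using V by auto
    thus "F x = 1 * (\<Prod>w\<in>V. F (if w \<in> x then {v} else {}))" using V by auto
  qed simp
qed

lemma deg_star:
  assumes "finite V" "signature V F" "a \<subseteq> V" "F a \<noteq> 0"
    and st: "\<forall>x. x \<subseteq> V \<longrightarrow> F x * F a ^ card V = F a * (\<Prod>v\<in>V. F (upd a v (v\<in>x)))"
  shows "degenerate V F"
  unfolding degenerate_def
proof (intro exI[of _ "F a"] exI[of _ "\<lambda>v b. if v \<in> V then F (upd a v b) / F a else 1"] conjI allI impI)
  show "0 \<le> F a" using assms(2,3) unfolding signature_def by auto
next
  fix v b show "0 \<le> (if v \<in> V then F (upd a v b) / F a else 1)"
    using assms(2,3) upd_sub[OF assms(3)] unfolding signature_def by auto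
next
  fix x assume x: "x \<subseteq> V"
  have "(\<Prod>v\<in>V. (if v \<in> V then F (upd a v (v\<in>x)) / F a else 1)) = (\<Prod>v\<in>V. F (upd a v (v\<in>x)) / F a)"
    by (rule prod.cong) auto
  also have "\<dots> = (\<Prod>v\<in>V. F (upd a v (v\<in>x))) / F a ^ card V"
    by (simp add: prod_dividef)
  finally have "F a * (\<Prod>v\<in>V. (if v \<in> V then F (upd a v (v\<in>x)) / F a else 1)) = F a * (\<Prod>v\<in>V. F (upd a v (v\<in>x))) / F a ^ card V"
    by simp
  also have "\<dots> = F x" using st x assms(4) by (simp add: field_simps)
  finally show "F x = F a * (\<Prod>v\<in>V. (if v \<in> V then F (upd a v (v\<in>x)) / F a else 1))" by simp
qed

lemma local_star:
  assumes fin: "finite V"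
    and pin: "\<forall>D P. D \<subseteq> V \<and> D \<noteq> {} \<and> P \<subseteq> D \<longrightarrow> degenerate (V - D) (pinning F P)"
    and t: "t \<in> V" and b: "b \<subseteq> V" and x: "x \<subseteq> V" and tx: "(t \<in> x) = (t \<in> b)"
  shows "F x * F b ^ (card V - 1) = F b * (\<Prod>w\<in>V-{t}. F (upd b w (w\<in>x)))"
proof -
  have dg: "degenerate (V - {t}) (pinning F ({t} \<inter> b))" using pin[rule_format, of "{t}" "{t} \<inter> b"] t by simp
  have s: "pinning F ({t} \<inter> b) (x - {t}) * pinning F ({t} \<inter> b) (b - {t}) ^ card (V - {t})
     = pinning F ({t} \<inter> b) (b - {t}) * (\<Prod>w\<in>V - {t}. pinning F ({t} \<inter> b) (upd (b - {t}) w (w \<in> x - {t})))"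
    using star_deg[OF dg, of "x - {t}" "b - {t}"] fin x b by blast
  have e1: "pinning F ({t} \<inter> b) (x - {t}) = F x"
  proof -
    have "x - {t} \<union> ({t} \<inter> b) = x" using tx by auto
    thus ?thesis by (simp add: pinning_def)
  qed
  have e2: "pinning F ({t} \<inter> b) (b - {t}) = F b"
  proof -
    have "b - {t} \<union> ({t} \<inter> b) = b" by auto
    thus ?thesis by (simp add: pinning_def)
  qed
  have e3: "(\<Prod>w\<in>V - {t}. pinning F ({t} \<inter> b) (upd (b - {t}) w (w \<in> x - {t}))) = (\<Prod>w\<in>V-{t}. F (upd b w (w\<in>x)))"
  proof (rule prod.cong)
    fix w assume "w \<in> V - {t}"
    hence "upd (b - {t}) w (w \<in> x - {t}) \<union> ({t} \<inter> b) = upd b w (w\<in>x)" by (auto simp: upd_def)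
    thus "pinning F ({t} \<inter> b) (upd (b - {t}) w (w \<in> x - {t})) = F (upd b w (w\<in>x))" by (simp add: pinning_def)
  qed simp
  have "card (V - {t}) = card V - 1" using fin t by simp
  thus ?thesis using s unfolding e1 e2 e3 by simp
qed

lemma prod_const_except:
  assumes "finite S" "\<forall>v\<in>S. h v = k"
  shows "(\<Prod>v\<in>S. h v) = k ^ card S"
  using assms by (simp add: prod_constant[symmetric] del: prod_constant)

theorem mainTheorem10:
  fixes V :: "'v set" and F :: "'v set \<Rightarrow> real"
  assumes "finite V"
    and "signature V F"
    and "\<not> degenerate V F"
    and "\<forall>D P. D \<subseteq> V \<and> D \<noteq> {} \<and> P \<subseteq> D \<longrightarrow> degenerate (V - D) (pinning F P)"
  shows "card V = 2 \<or> (\<exists>x. x \<subseteq> V \<and> supp V F = {x, V - x})"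
proof (rule ccontr)
  assume neg: "\<not> ?thesis"
  note fin = assms(1) and sig = assms(2) and nd = assms(3) and pin = assms(4)
  have n3: "card V \<ge> 3"
  proof (rule ccontr)
    assume "\<not> card V \<ge> 3"
    hence "card V \<le> 1" using neg by auto
    thus False using deg_small[OF fin _ sig] nd by blast
  qed
  define n where "n = card V"
  have Vne: "V \<noteq> {}" using n3 by auto
  have ls: "\<And>t b x. t \<in> V \<Longrightarrow> b \<subseteq> V \<Longrightarrow> x \<subseteq> V \<Longrightarrow> (t \<in> x) = (t \<in> b) \<Longrightarrow>
     F x * F b ^ (n - 1) = F b * (\<Prod>w\<in>V-{t}. F (upd b w (w\<in>x)))"
    unfolding n_def using local_star[OF fin pin] by blast
  have starpart: "F x * F a ^ n = F a * (\<Prod>v\<in>V. F (upd a v (v\<in>x)))"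
    if a: "a \<subseteq> V" and x: "x \<subseteq> V" and xa: "x \<noteq> V - a" for a x
  proof -
    obtain t where t: "t \<in> V" "(t \<in> x) = (t \<in> b)" if "b = a" for b
      using a x xa by blast
    have t1: "t \<in> V" and t2: "(t \<in> x) = (t \<in> a)" using t by auto
    have l: "F x * F a ^ (n - 1) = F a * (\<Prod>w\<in>V-{t}. F (upd a w (w\<in>x)))"
      using ls[OF t1 a x t2] .
    have ua: "upd a t (t \<in> x) = a" using t2 by (auto simp: upd_def)
    have "(\<Prod>v\<in>V. F (upd a v (v\<in>x))) = F a * (\<Prod>w\<in>V-{t}. F (upd a w (w\<in>x)))"
      using prod.remove[OF fin t1, of "\<lambda>v. F (upd a v (v\<in>x))"] ua by simp
    moreover have "F a ^ n = F a * F a ^ (n - 1)" using n3 unfolding n_def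
      by (metis One_nat_def Suc_pred not_numeral_le_zero not_gr_zero power_Suc)
    ultimately show ?thesis using l by (simp add: algebra_simps)
  qed
  define nz where "nz = (\<exists>a u. a \<subseteq> V \<and> u \<in> V \<and> F a \<noteq> 0 \<and> F (upd a u (u \<notin> a)) \<noteq> 0)"
  have sub_supp: "\<And>a. a \<subseteq> V \<Longrightarrow> F a \<noteq> 0 \<Longrightarrow> (\<forall>x. x \<subseteq> V \<longrightarrow> F x * F a ^ n = F a * (\<Prod>v\<in>V. F (upd a v (v\<in>x)))) \<Longrightarrow> False"
    using deg_star[OF fin sig] nd unfolding n_def by blast
  show False
  proof (cases nz)
    case True
    then obtain a u where a: "a \<subseteq> V" and u: "u \<in> V" and Fa: "F a \<noteq> 0" and Fb: "F (upd a u (u \<notin> a)) \<noteq> 0"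
      unfolding nz_def by blast
    define b where "b = upd a u (u \<notin> a)"
    have b: "b \<subseteq> V" unfolding b_def using upd_sub[OF a u] .
    have Fb': "F b \<noteq> 0" using Fb b_def by simp
    have exch: "F (upd b w (w \<notin> a)) * F a = F b * F (upd a w (w \<notin> a))" if w: "w \<in> V - {u}" for w
    proof -
      have "card (V - {u, w}) \<ge> 1"
      proof -
        have "card (V - {u,w}) \<ge> card V - card {u,w}" by (simp add: diff_card_le_card_Diff fin)
        moreover have "card {u,w} \<le> 2" by (simp add: card_insert_le_m1)
        ultimately show ?thesis using n3 by linarith
      qed
      then obtain t where t: "t \<in> V" "t \<noteq> u" "t \<noteq> w"
        by (metis Diff_iff card_0_eq finite_Diff fin insertCI not_one_le_zero all_not_in_conv)
      define x' where "x' = upd b w (w \<notin> a)"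
      have x': "x' \<subseteq> V" unfolding x'_def using upd_sub[OF b] w by auto
      have tx: "(t \<in> x') = (t \<in> a)" using t unfolding x'_def b_def upd_def by auto
      have l: "F x' * F a ^ (n - 1) = F a * (\<Prod>v\<in>V-{t}. F (upd a v (v\<in>x')))"
        using ls[OF t(1) a x' tx] .
      have wu: "w \<noteq> u" using w by auto
      have r1: "upd a u (u \<in> x') = b" using wu unfolding x'_def b_def upd_def by auto
      have r2: "upd a w (w \<in> x') = upd a w (w \<notin> a)" using wu unfolding x'_def b_def upd_def by auto
      have r3: "\<forall>v\<in>V-{t}-{u}-{w}. F (upd a v (v\<in>x')) = F a"
      proof
        fix v assume "v \<in> V-{t}-{u}-{w}"
        hence "upd a v (v\<in>x') = a" unfolding x'_def b_def upd_def by auto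
        thus "F (upd a v (v\<in>x')) = F a" by simp
      qed
      have fin': "finite (V - {t})" using fin by simp
      have uin: "u \<in> V - {t}" using u t by auto
      have win: "w \<in> V - {t} - {u}" using w t by auto
      have cd: "card (V-{t}-{u}-{w}) = n - 3"
        using fin t u w unfolding n_def by (auto simp: card_Diff_singleton_if)
      have "(\<Prod>v\<in>V-{t}. F (upd a v (v\<in>x'))) = F b * (F (upd a w (w \<notin> a)) * F a ^ (n - 3))"
      proof -
        have "(\<Prod>v\<in>V-{t}. F (upd a v (v\<in>x'))) = F (upd a u (u\<in>x')) * (\<Prod>v\<in>V-{t}-{u}. F (upd a v (v\<in>x')))"
          using prod.remove[OF fin' uin] by blast
        also have "(\<Prod>v\<in>V-{t}-{u}. F (upd a v (v\<in>x'))) = F (upd a w (w\<in>x')) * (\<Prod>v\<in>V-{t}-{u}-{w}. F (upd a v (v\<in>x')))"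
          using prod.remove[OF _ win] fin by blast
        also have "(\<Prod>v\<in>V-{t}-{u}-{w}. F (upd a v (v\<in>x'))) = F a ^ (n - 3)"
          using prod_const_except[OF _ r3] fin cd by simp
        finally show ?thesis using r1 r2 by simp
      qed
      hence l2: "F x' * F a ^ (n - 3 + 2) = F a * F a ^ (n - 3) * (F b * F (upd a w (w \<notin> a)))"
        using l n3 unfolding n_def
        by (simp add: numeral_2_eq_2 numeral_3_eq_3 Suc_diff_Suc algebra_simps)
      have "F x' * F a * F a ^ (n - 3 + 1) = F b * F (upd a w (w \<notin> a)) * F a ^ (n - 3 + 1)"
        using l2 by (simp add: algebra_simps numeral_2_eq_2)
      hence "F x' * F a = F b * F (upd a w (w \<notin> a))" using Fa by simp
      thus ?thesis unfolding x'_def .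
    qed
    have "\<forall>x. x \<subseteq> V \<longrightarrow> F x * F a ^ n = F a * (\<Prod>v\<in>V. F (upd a v (v\<in>x)))"
    proof (intro allI impI)
      fix x assume x: "x \<subseteq> V"
      show "F x * F a ^ n = F a * (\<Prod>v\<in>V. F (upd a v (v\<in>x)))"
      proof (cases "x = V - a")
        case False
        thus ?thesis using starpart[OF a x] by blast
      next
        case True
        have tx: "(u \<in> x) = (u \<in> b)" using True u unfolding b_def upd_def by auto
        have l: "F x * F b ^ (n - 1) = F b * (\<Prod>w\<in>V-{u}. F (upd b w (w\<in>x)))"
          using ls[OF u b x tx] .
        define P where "P = (\<Prod>w\<in>V-{u}. F (upd b w (w \<notin> a)))"
        define Q where "Q = (\<Prod>w\<in>V-{u}. F (upd a w (w \<notin> a)))"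
        have Pe: "(\<Prod>w\<in>V-{u}. F (upd b w (w\<in>x))) = P"
          unfolding P_def using True by (intro prod.cong) auto
        have cu: "card (V - {u}) = n - 1" using fin u unfolding n_def by simp
        have "P * F a ^ (n - 1) = (\<Prod>w\<in>V-{u}. F (upd b w (w \<notin> a)) * F a)"
          unfolding P_def using cu by (simp add: prod.distrib)
        also have "\<dots> = (\<Prod>w\<in>V-{u}. F b * F (upd a w (w \<notin> a)))"
          using exch by (intro prod.cong) auto
        also have "\<dots> = F b ^ (n - 1) * Q" unfolding Q_def using cu by (simp add: prod.distrib)
        finally have PQ: "P * F a ^ (n - 1) = F b ^ (n - 1) * Q" .
        have "F x * F a ^ (n - 1) * F b ^ (n - 1) = F b * (P * F a ^ (n - 1))"
          using l Pe by (simp add: algebra_simps)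
        also have "\<dots> = F b * Q * F b ^ (n - 1)" using PQ by (simp add: algebra_simps)
        finally have "F x * F a ^ (n - 1) = F b * Q" using Fb' by simp
        moreover have "(\<Prod>v\<in>V. F (upd a v (v\<in>x))) = F b * Q"
        proof -
          have "(\<Prod>v\<in>V. F (upd a v (v\<in>x))) = F (upd a u (u\<in>x)) * (\<Prod>v\<in>V-{u}. F (upd a v (v\<in>x)))"
            using prod.remove[OF fin u] by blast
          also have "upd a u (u\<in>x) = b" unfolding b_def using True u by simp
          also have "(\<Prod>v\<in>V-{u}. F (upd a v (v\<in>x))) = Q"
            unfolding Q_def using True by (intro prod.cong) auto
          finally show ?thesis .
        qed
        moreover have "F a ^ n = F a * F a ^ (n - 1)" using n3 unfolding n_def
          by (metis One_nat_def Suc_pred not_numeral_le_zero not_gr_zero power_Suc)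
        ultimately show ?thesis by (simp add: algebra_simps)
      qed
    qed
    thus False using sub_supp[OF a Fa] by blast
  next
    case False
    hence nb: "\<And>a u. a \<subseteq> V \<Longrightarrow> u \<in> V \<Longrightarrow> F a \<noteq> 0 \<Longrightarrow> F (upd a u (u \<notin> a)) = 0"
      unfolding nz_def by blast
    show False
    proof (cases "\<exists>a. a \<subseteq> V \<and> F a \<noteq> 0")
      case False
      hence "degenerate V F" unfolding degenerate_def
        by (intro exI[of _ 0] exI[of _ "\<lambda>_ _. 0"]) auto
      thus False using nd by blast
    next
      case True
      then obtain a where a: "a \<subseteq> V" and Fa: "F a \<noteq> 0" by blast
      have only: "x = a \<or> x = V - a" if x: "x \<subseteq> V" and Fx: "F x \<noteq> 0" for x
      proof (rule ccontr)
        assume c: "\<not> (x = a \<or> x = V - a)"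
        have s: "F x * F a ^ n = F a * (\<Prod>v\<in>V. F (upd a v (v\<in>x)))"
          using starpart[OF a x] c by blast
        obtain v where v: "v \<in> V" "(v \<in> x) \<noteq> (v \<in> a)" using c x a by blast
        have "F (upd a v (v\<in>x)) = 0" using nb[OF a v(1) Fa] v(2) by (cases "v \<in> a") auto
        hence "(\<Prod>v\<in>V. F (upd a v (v\<in>x))) = 0" using v(1) fin by (meson prod_zero)
        hence "F x * F a ^ n = 0" using s by simp
        thus False using Fx Fa by simp
      qed
      show False
      proof (cases "F (V - a) = 0")
        case False
        have "supp V F = {a, V - a}"
          unfolding supp_def using only False Fa a by auto
        thus False using neg a by blast
      next
        case Fc: True
        have "\<forall>x. x \<subseteq> V \<longrightarrow> F x * F a ^ n = F a * (\<Prod>v\<in>V. F (upd a v (v\<in>x)))"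
        proof (intro allI impI)
          fix x assume x: "x \<subseteq> V"
          show "F x * F a ^ n = F a * (\<Prod>v\<in>V. F (upd a v (v\<in>x)))"
          proof (cases "x = V - a")
            case False
            thus ?thesis using starpart[OF a x] by blast
          next
            case True
            obtain v where v: "v \<in> V" using Vne by blast
            have "F (upd a v (v\<in>x)) = 0" using nb[OF a v Fa] True v by simp
            hence "(\<Prod>v\<in>V. F (upd a v (v\<in>x))) = 0" using v fin by (meson prod_zero)
            thus ?thesis using True Fc by simp
          qed
        qed
        thus False using sub_supp[OF a Fa] by blast
      qed
    qed
  qed
qed

end
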